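(* For any integers $n\ge1$ and $0<r\le n$, there is an $r$-covering code $C\subseteq2^n$ with $$|C|=S:=\left\lceil\ln(2)(n+1)\frac{2^n}{V(n,r)}\right\rceil$$ such that for every integer $q\in[r,n]$ and every $\tau\in2^n$, $$|B_q(\tau)\cap C|<S_q:=\left\lceil5(n+1)\frac{V(n,q)}{V(n,r)}\right\rceil.$$
   Context: For $\sigma,\tau\in2^n$, $\Delta(\sigma,\tau)$ is the Hamming distance (number of differing positions), $B_q(\tau)=\{\sigma\in2^n:\Delta(\sigma,\tau)\le q\}$ and $V(n,q)=|B_q(\tau)|=\sum_{i\le q}\binom ni$. A code $C\subseteq2^n$ is $r$-covering if for every $\tau\in2^n$ there is $\sigma\in C$ with $\Delta(\tau,\sigma)\le r$. *)

theory Defs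
  imports Complex_Main
begin

definition cube :: "nat \<Rightarrow> bool list set" where
  "cube n = {xs. length xs = n}"

definition hdist :: "bool list \<Rightarrow> bool list \<Rightarrow> nat" where
  "hdist s t = card {i. i < length s \<and> s ! i \<noteq> t ! i}"

definition hball :: "nat \<Rightarrow> nat \<Rightarrow> bool list \<Rightarrow> bool list set" where
  "hball n q t = {s \<in> cube n. hdist s t \<le> q}"

definition V :: "nat \<Rightarrow> nat \<Rightarrow> nat" where
  "V n q = (\<Sum>i\<le>q. n choose i)"

definition covering :: "nat \<Rightarrow> nat \<Rightarrow> bool list set \<Rightarrow> bool" where
  "covering n r C \<longleftrightarrow> C \<subseteq> cube n \<and> (\<forall>t\<in>cube n. \<exists>s\<in>C. hdist t s \<le> r)"

end

theory Submission
  imports Defs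
begin


lemma pow_fact_le_exp:
  fixes x :: real assumes "0 \<le> x"
  shows "x ^ k / fact k \<le> exp x"
proof -
  have sm: "summable (\<lambda>n. x ^ n / fact n)"
    using summable_exp_generic[of x] by (simp add: divide_inverse ac_simps)
  have "sum (\<lambda>n. x ^ n / fact n) {k} \<le> suminf (\<lambda>n. x ^ n / fact n)"
    by (rule sum_le_suminf[OF sm]) (use assms in auto)
  also have "suminf (\<lambda>n. x ^ n / fact n) = exp x"
    by (simp add: exp_def divide_inverse ac_simps)
  finally show ?thesis by simp
qed

lemma fact_lower:
  "real k ^ k \<le> 3 ^ k * fact k"
proof -
  have "real k ^ k / fact k \<le> exp (real k)" by (rule pow_fact_le_exp) simp
  also have "exp (real k) = exp 1 ^ k" using exp_of_nat_mult[of k 1] by simp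
  also have "\<dots> \<le> 3 ^ k" using exp_le by (intro power_mono) auto
  finally show ?thesis by (simp add: divide_le_eq mult.commute)
qed

lemma ln2_le: "ln (2::real) \<le> 3/4"
proof -
  have "(1 + 3/32::real) ^ 8 \<le> exp (3/32) ^ 8"
    by (intro power_mono) (use exp_ge_add_one_self[of "3/32::real"] in auto)
  also have "exp (3/32::real) ^ 8 = exp (3/4)"
    using exp_of_nat_mult[of 8 "3/32::real"] by simp
  moreover have "(2::real) \<le> (1 + 3/32) ^ 8" by (simp add: power_divide)
  ultimately have "2 \<le> exp (3/4::real)" by linarith
  then show ?thesis by (metis ln_exp ln_le_cancel_iff exp_gt_zero zero_less_numeral)
qed

lemma binom_shift:
  assumes "k \<le> S" "S \<le> N"
  shows "real ((N - k) choose (S - k)) \<le> real (N choose S) * (real S / real N) ^ k"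
  using assms
proof (induction k)
  case 0 then show ?case by simp
next
  case (Suc k)
  define m where "m = N - Suc k"
  define j where "j = S - Suc k"
  have mk: "N - k = Suc m" and jk: "S - k = Suc j" using Suc.prems by (auto simp: m_def j_def)
  have mk2: "N - Suc k = m" and jk2: "S - Suc k = j" by (simp_all add: m_def j_def)
  have id: "Suc j * (Suc m choose Suc j) = Suc m * (m choose j)"
    using binomial_absorption[of j "Suc m"] by simp
  have "real (Suc j) * real (Suc m choose Suc j) = real (Suc m) * real (m choose j)"
    using arg_cong[OF id, of real] by (simp only: of_nat_mult)
  then have eq: "real (m choose j) = real (Suc m choose Suc j) * (real (Suc j) / real (Suc m))"
    by (simp add: divide_simps del: of_nat_Suc) (simp add: mult.commute)
  have fr: "real (Suc j) / real (Suc m) \<le> real S / real N"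
  proof -
    have a: "real (Suc j) = real S - real k" "real (Suc m) = real N - real k"
      using mk jk Suc.prems by (simp_all add: of_nat_diff[symmetric])
    have "real (Suc j) * real N \<le> real S * real (Suc m)"
      unfolding a using Suc.prems by (simp add: algebra_simps mult_right_mono)
    moreover have "real N > 0" using Suc.prems by simp
    ultimately show ?thesis by (simp add: divide_simps del: of_nat_Suc)
  qed
  have IH: "real (Suc m choose Suc j) \<le> real (N choose S) * (real S / real N) ^ k"
    using Suc.IH Suc.prems mk jk by simp
  have "real ((N - Suc k) choose (S - Suc k)) = real (Suc m choose Suc j) * (real (Suc j) / real (Suc m))"
    unfolding mk2 jk2 by (rule eq)
  also have "\<dots> \<le> (real (N choose S) * (real S / real N) ^ k) * (real S / real N)"
    by (rule mult_mono[OF IH fr]) auto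
  finally show ?case by (simp add: ac_simps)
qed

lemma binom_avoid:
  assumes "v \<le> N" "S \<le> N"
  shows "real ((N - v) choose S) \<le> real (N choose S) * (1 - real S / real N) ^ v"
  using assms
proof (induction v)
  case 0 then show ?case by simp
next
  case (Suc v)
  define m where "m = N - v"
  have m1: "m \<ge> 1" "m \<le> N" using Suc.prems by (auto simp: m_def)
  have id: "(m - S) * (m choose S) = m * ((m - 1) choose S)"
    by (rule binomial_absorb_comp)
  have eq: "real ((N - Suc v) choose S) = real (m choose S) * (real (m - S) / real m)"
    using arg_cong[OF id, of real] m1 by (simp add: m_def field_simps)
  have fac: "real (m - S) / real m \<le> 1 - real S / real N"
  proof (cases "S \<le> m")
    case True
    then have "real (m - S) / real m = 1 - real S / real m" using m1 by (simp add: of_nat_diff field_simps)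
    also have "\<dots> \<le> 1 - real S / real N" using m1 by (intro diff_left_mono divide_left_mono) auto
    finally show ?thesis .
  next
    case False
    then show ?thesis using m1 Suc.prems by (simp add: field_simps)
  qed
  have "real ((N - Suc v) choose S) \<le> real (m choose S) * (1 - real S / real N)"
    unfolding eq by (intro mult_left_mono fac) simp
  also have "\<dots> \<le> real (N choose S) * (1 - real S / real N) ^ v * (1 - real S / real N)"
  proof (intro mult_right_mono)
    show "real (m choose S) \<le> real (N choose S) * (1 - real S / real N) ^ v"
      using Suc by (simp add: m_def)
    show "0 \<le> 1 - real S / real N"
      using Suc.prems by (simp add: divide_le_eq_1)
  qed
  finally show ?case by (simp add: ac_simps)
qed



lemma finite_cube: "finite (cube n)"
proof -
  have "cube n = {xs. set xs \<subseteq> (UNIV::bool set) \<and> length xs = n}" by (auto simp: cube_def)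
  then show ?thesis using finite_lists_length_eq[of "UNIV::bool set" n] by simp
qed

lemma card_cube: "card (cube n) = 2 ^ n"
proof -
  have "cube n = {xs. set xs \<subseteq> (UNIV::bool set) \<and> length xs = n}" by (auto simp: cube_def)
  then show ?thesis using card_lists_length_eq[of "UNIV::bool set" n] by simp
qed

lemma hdist_sym: "length s = length t \<Longrightarrow> hdist s t = hdist t s"
  unfolding hdist_def by metis

lemma card_le_subsets:
  assumes "finite A"
  shows "card {D. D \<subseteq> A \<and> card D \<le> q} = (\<Sum>i\<le>q. card A choose i)"
proof -
  have eq: "{D. D \<subseteq> A \<and> card D \<le> q} = (\<Union>i\<in>{..q}. {D. D \<subseteq> A \<and> card D = i})" by auto
  have "card (\<Union>i\<in>{..q}. {D. D \<subseteq> A \<and> card D = i}) = (\<Sum>i\<le>q. card {D. D \<subseteq> A \<and> card D = i})"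
    by (rule card_UN_disjoint) (use assms in \<open>auto intro: finite_subset\<close>)
  also have "\<dots> = (\<Sum>i\<le>q. card A choose i)" using n_subsets[OF assms] by simp
  finally show ?thesis using eq by simp
qed

lemma card_hball:
  assumes "\<tau> \<in> cube n"
  shows "card (hball n q \<tau>) = V n q"
proof -
  define d where "d s = {i. i < n \<and> s ! i \<noteq> \<tau> ! i}" for s
  have lt: "length \<tau> = n" using assms by (simp add: cube_def)
  have hd: "hdist s \<tau> = card (d s)" if "s \<in> cube n" for s
    using that by (simp add: hdist_def d_def cube_def)
  have inj: "inj_on d (cube n)"
  proof (rule inj_onI)
    fix s s' assume s: "s \<in> cube n" "s' \<in> cube n" "d s = d s'"
    show "s = s'"
    proof (rule nth_equalityI)
      show "length s = length s'" using s by (simp add: cube_def)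
      fix i assume "i < length s"
      then have "i < n" using s by (simp add: cube_def)
      then have "(s ! i \<noteq> \<tau> ! i) = (s' ! i \<noteq> \<tau> ! i)"
        using s(3) unfolding d_def set_eq_iff by blast
      then show "s ! i = s' ! i" by blast
    qed
  qed
  have img: "d ` hball n q \<tau> = {D. D \<subseteq> {..<n} \<and> card D \<le> q}"
  proof (intro equalityI subsetI)
    fix D assume "D \<in> d ` hball n q \<tau>"
    then obtain s where "s \<in> hball n q \<tau>" "D = d s" by blast
    then show "D \<in> {D. D \<subseteq> {..<n} \<and> card D \<le> q}"
      using hd by (auto simp: hball_def d_def)
  next
    fix D assume D: "D \<in> {D. D \<subseteq> {..<n} \<and> card D \<le> q}"
    define s where "s = map (\<lambda>i. (i \<in> D) \<noteq> \<tau> ! i) [0..<n]"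
    have sc: "s \<in> cube n" by (simp add: s_def cube_def)
    have ds: "d s = D" using D by (auto simp: d_def s_def)
    have "s \<in> hball n q \<tau>" using sc hd[OF sc] ds D by (simp add: hball_def)
    then show "D \<in> d ` hball n q \<tau>" using ds by blast
  qed
  have "card (hball n q \<tau>) = card (d ` hball n q \<tau>)"
    by (rule card_image[symmetric]) (rule inj_on_subset[OF inj], auto simp: hball_def)
  also have "\<dots> = V n q" unfolding img using card_le_subsets[of "{..<n}" q] by (simp add: V_def)
  finally show ?thesis .
qed

lemma hball_sub: "hball n q \<tau> \<subseteq> cube n" by (auto simp: hball_def)

lemma hball_mono: "q \<le> q' \<Longrightarrow> hball n q \<tau> \<subseteq> hball n q' \<tau>" by (auto simp: hball_def)

lemma card_avoid:
  assumes "finite X" "B \<subseteq> X"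
  shows "card {C. C \<subseteq> X \<and> card C = S \<and> C \<inter> B = {}} = (card X - card B) choose S"
proof -
  have "{C. C \<subseteq> X \<and> card C = S \<and> C \<inter> B = {}} = {C. C \<subseteq> X - B \<and> card C = S}" by auto
  then show ?thesis using n_subsets[of "X - B" S] assms
    by (simp add: card_Diff_subset finite_subset)
qed

lemma card_contain:
  assumes "finite X" "K \<subseteq> X" "card K = k" "k \<le> S"
  shows "card {C. C \<subseteq> X \<and> card C = S \<and> K \<subseteq> C} \<le> (card X - k) choose (S - k)"
proof -
  have fK: "finite K" using assms finite_subset by blast
  have sub: "{C. C \<subseteq> X \<and> card C = S \<and> K \<subseteq> C} \<subseteq> (\<lambda>D. D \<union> K) ` {D. D \<subseteq> X - K \<and> card D = S - k}"
  proof
    fix C assume C: "C \<in> {C. C \<subseteq> X \<and> card C = S \<and> K \<subseteq> C}"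
    have "finite C" using C assms finite_subset by blast
    then have "card (C - K) = S - k" using C assms card_Diff_subset[OF fK] by auto
    moreover have "C = (C - K) \<union> K" using C by auto
    ultimately show "C \<in> (\<lambda>D. D \<union> K) ` {D. D \<subseteq> X - K \<and> card D = S - k}" using C by blast
  qed
  have "card {C. C \<subseteq> X \<and> card C = S \<and> K \<subseteq> C} \<le> card ((\<lambda>D. D \<union> K) ` {D. D \<subseteq> X - K \<and> card D = S - k})"
    by (rule card_mono[OF _ sub]) (use assms in \<open>auto intro!: finite_imageI\<close>)
  also have "\<dots> \<le> card {D. D \<subseteq> X - K \<and> card D = S - k}" by (rule card_image_le) (use assms in auto)
  also have "\<dots> = (card X - k) choose (S - k)"
    using n_subsets[of "X - K" "S - k"] assms by (simp add: card_Diff_subset fK)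
  finally show ?thesis .
qed

lemma card_heavy:
  assumes "finite X" "B \<subseteq> X" "k \<le> S"
  shows "card {C. C \<subseteq> X \<and> card C = S \<and> k \<le> card (B \<inter> C)} \<le> (card B choose k) * ((card X - k) choose (S - k))"
proof -
  let ?K = "{K. K \<subseteq> B \<and> card K = k}"
  have fB: "finite B" using assms finite_subset by blast
  have sub: "{C. C \<subseteq> X \<and> card C = S \<and> k \<le> card (B \<inter> C)} \<subseteq> (\<Union>K\<in>?K. {C. C \<subseteq> X \<and> card C = S \<and> K \<subseteq> C})"
  proof
    fix C assume C: "C \<in> {C. C \<subseteq> X \<and> card C = S \<and> k \<le> card (B \<inter> C)}"
    then obtain K where "K \<subseteq> B \<inter> C" "card K = k" using obtain_subset_with_card_n by blast
    then show "C \<in> (\<Union>K\<in>?K. {C. C \<subseteq> X \<and> card C = S \<and> K \<subseteq> C})" using C by blast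
  qed
  have fK: "finite ?K" using fB by (simp add: finite_Collect_subsets)
  have "card {C. C \<subseteq> X \<and> card C = S \<and> k \<le> card (B \<inter> C)} \<le> card (\<Union>K\<in>?K. {C. C \<subseteq> X \<and> card C = S \<and> K \<subseteq> C})"
    by (rule card_mono[OF _ sub]) (use fK assms in \<open>auto intro: finite_subset\<close>)
  also have "\<dots> \<le> (\<Sum>K\<in>?K. card {C. C \<subseteq> X \<and> card C = S \<and> K \<subseteq> C})" by (rule card_UN_le[OF fK])
  also have "\<dots> \<le> (\<Sum>K\<in>?K. (card X - k) choose (S - k))"
    by (rule sum_mono) (use card_contain[OF assms(1)] assms in force)
  also have "\<dots> = (card B choose k) * ((card X - k) choose (S - k))" using n_subsets[OF fB] by simp
  finally show ?thesis .
qed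



theorem lemma3p1:
  fixes n r :: nat
  assumes "n \<ge> 1" and "0 < r" and "r \<le> n"
  shows "\<exists>C. covering n r C \<and>
     int (card C) = \<lceil>ln 2 * real (n + 1) * 2 ^ n / real (V n r)\<rceil> \<and>
     (\<forall>q. r \<le> q \<and> q \<le> n \<longrightarrow> (\<forall>\<tau>\<in>cube n.
        int (card (hball n q \<tau> \<inter> C)) < \<lceil>5 * real (n + 1) * real (V n q) / real (V n r)\<rceil>))"
proof -
  define N where "N = (2::nat) ^ n"
  define X where "X = cube n"
  define Sr where "Sr = ln 2 * real (n + 1) * 2 ^ n / real (V n r)"
  define S where "S = nat \<lceil>Sr\<rceil>"
  define kq where "kq q = nat \<lceil>5 * real (n + 1) * real (V n q) / real (V n r)\<rceil>" for q
  define Cs where "Cs = {C. C \<subseteq> X \<and> card C = S}"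
  have fX: "finite X" and cX: "card X = N" by (simp_all add: X_def N_def finite_cube card_cube)
  have rN: "real N = 2 ^ n" by (simp add: N_def)
  have t0: "replicate n False \<in> cube n" by (simp add: cube_def)
  have Vr_ge: "n + 1 \<le> V n r"
  proof -
    have "(\<Sum>i\<le>1. n choose i) \<le> (\<Sum>i\<le>r. n choose i)"
      by (rule sum_mono2) (use assms in auto)
    then show ?thesis by (simp add: V_def)
  qed
  have Vq_le: "V n q \<le> N" for q
    using card_hball[OF t0, of q] card_mono[OF fX[unfolded X_def] hball_sub[of n q "replicate n False"]] cX
    by (simp add: X_def)
  have Vmono: "V n r \<le> V n q" if "r \<le> q" for q
    using card_hball[OF t0, of q] card_hball[OF t0, of r]
      card_mono[OF finite_subset[OF hball_sub fX[unfolded X_def]] hball_mono[OF that], of "replicate n False"] by simp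
  have Vr_pos: "real (V n r) > 0" using Vr_ge by simp
  have ln2: "ln (2::real) \<le> 3/4" "ln (2::real) > 0" using ln2_le by auto
  have Sr_pos: "0 < Sr" unfolding Sr_def using Vr_pos ln2 by simp
  have "ln 2 * real (n + 1) \<le> real (V n r)"
  proof -
    have "ln 2 * real (n + 1) \<le> 1 * real (n + 1)" using ln2 by (intro mult_right_mono) auto
    also have "\<dots> \<le> real (V n r)" using Vr_ge by simp
    finally show ?thesis .
  qed
  then have Sr_le: "Sr \<le> real N" unfolding Sr_def rN using Vr_pos
    by (simp add: divide_le_eq mult.commute mult_right_mono)
  have rS: "real S = of_int \<lceil>Sr\<rceil>" unfolding S_def using Sr_pos by simp
  have S_ge: "Sr \<le> real S" using rS by linarith
  have S_lt: "real S < Sr + 1" using rS by linarith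
  have S_le: "S \<le> N"
  proof -
    have "\<lceil>Sr\<rceil> \<le> int N" using Sr_le by (simp add: ceiling_le_iff)
    then show ?thesis unfolding S_def by (simp add: Sr_le)
  qed
  have S_pos: "S \<ge> 1"
  proof -
    have "real S > 0" using S_ge Sr_pos by linarith
    then show ?thesis by simp
  qed
  have cCs: "card Cs = N choose S" unfolding Cs_def using n_subsets[OF fX] cX by simp
  have Cs_pos: "0 < N choose S" using S_le by simp
  define B1 where "B1 \<tau> = {C \<in> Cs. C \<inter> hball n r \<tau> = {}}" for \<tau>
  define B2 where "B2 \<tau> q = {C \<in> Cs. kq q \<le> card (hball n q \<tau> \<inter> C)}" for \<tau> q
  have b1: "real (card (B1 \<tau>)) \<le> real (N choose S) / 2 ^ (n + 1)" if "\<tau> \<in> X" for \<tau>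
  proof -
    have "B1 \<tau> = {C. C \<subseteq> X \<and> card C = S \<and> C \<inter> hball n r \<tau> = {}}" by (auto simp: B1_def Cs_def)
    then have "card (B1 \<tau>) = (N - V n r) choose S"
      using card_avoid[OF fX, of "hball n r \<tau>" S] card_hball[of \<tau> n r] that cX
      by (simp add: X_def hball_sub)
    then have c1: "real (card (B1 \<tau>)) \<le> real (N choose S) * (1 - real S / real N) ^ V n r"
      using binom_avoid[OF Vq_le S_le] by simp
    have "(1 - real S / real N) ^ V n r \<le> exp (- (real S / real N)) ^ V n r"
    proof (rule power_mono)
      show "0 \<le> 1 - real S / real N" using S_le by (simp add: N_def)
      show "1 - real S / real N \<le> exp (- (real S / real N))"
        using exp_ge_add_one_self[of "- (real S / real N)"] by simp
    qed
    also have "exp (- (real S / real N)) ^ V n r = exp (- (real S * real (V n r) / real N))"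
      using exp_of_nat_mult[of "V n r" "- (real S / real N)"] by (simp add: mult.commute)
    also have "\<dots> \<le> exp (- (ln 2 * real (n + 1)))"
    proof -
      have "Sr * real (V n r) / real N = ln 2 * real (n + 1)"
        unfolding Sr_def rN using Vr_pos by simp
      moreover have "Sr * real (V n r) / real N \<le> real S * real (V n r) / real N"
        using S_ge by (intro divide_right_mono mult_right_mono) auto
      ultimately show ?thesis by simp
    qed
    also have "exp (- (ln 2 * real (n + 1))) = 1 / 2 ^ (n + 1)"
    proof -
      have "exp (real (n + 1) * ln 2) = exp (ln 2) ^ (n + 1)" by (rule exp_of_nat_mult)
      then have "exp (ln 2 * real (n + 1)) = (2::real) ^ (n + 1)" by (simp add: mult.commute)
      then show ?thesis by (simp add: exp_minus inverse_eq_divide)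
    qed
    finally have "real (N choose S) * (1 - real S / real N) ^ V n r \<le> real (N choose S) * (1 / 2 ^ (n + 1))"
      by (intro mult_left_mono) auto
    then show ?thesis using c1 by simp
  qed
  have b2: "real (card (B2 \<tau> q)) \<le> real (N choose S) / 4 ^ (n + 1)"
    if "\<tau> \<in> X" "r \<le> q" "q \<le> n" for \<tau> q
  proof (cases "kq q \<le> S")
    case False
    have "B2 \<tau> q = {}"
    proof -
      have "card (hball n q \<tau> \<inter> C) \<le> S" if "C \<in> Cs" for C
        using that fX unfolding Cs_def by (metis (mono_tags) Int_lower2 card_mono finite_subset mem_Collect_eq)
      then show ?thesis using False unfolding B2_def by fastforce
    qed
    then show ?thesis by simp
  next
    case True
    define k where "k = kq q"
    define Vq where "Vq = V n q"
    define x where "x = real (n + 1) * real Vq / real (V n r)"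
    have x_ge: "x \<ge> real (n + 1)" unfolding x_def Vq_def using Vmono[OF that(2)] Vr_pos
      by (simp add: le_divide_eq mult_left_mono)
    have k_ge: "real k \<ge> 5 * x"
    proof -
      have "5 * x = 5 * real (n + 1) * real (V n q) / real (V n r)" by (simp add: x_def Vq_def)
      then show ?thesis unfolding k_def kq_def using real_nat_ceiling_ge by metis
    qed
    have k_pos: "real k > 0" using k_ge x_ge by linarith
    have "B2 \<tau> q = {C. C \<subseteq> X \<and> card C = S \<and> k \<le> card (hball n q \<tau> \<inter> C)}"
      by (auto simp: B2_def Cs_def k_def)
    then have "card (B2 \<tau> q) \<le> (Vq choose k) * ((N - k) choose (S - k))"
      using card_heavy[OF fX, of "hball n q \<tau>" k S] True card_hball[of \<tau> n q] that cX
      by (simp add: X_def hball_sub k_def Vq_def)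
    then have "real (card (B2 \<tau> q)) \<le> real (Vq choose k) * real ((N - k) choose (S - k))"
      by (metis of_nat_le_iff of_nat_mult)
    also have "\<dots> \<le> (real Vq ^ k / fact k) * (real (N choose S) * (real S / real N) ^ k)"
    proof (rule mult_mono)
      have "real (Vq choose k) * fact k \<le> real Vq ^ k"
        using binomial_fact_pow[of Vq k] by (metis of_nat_fact of_nat_le_iff of_nat_mult of_nat_power)
      then show "real (Vq choose k) \<le> real Vq ^ k / fact k" by (simp add: le_divide_eq)
      show "real ((N - k) choose (S - k)) \<le> real (N choose S) * (real S / real N) ^ k"
        using binom_shift[OF _ S_le] True by (simp add: k_def)
    qed auto
    also have "\<dots> = real (N choose S) * ((real Vq * real S / real N) ^ k / fact k)"
      by (simp add: power_mult_distrib power_divide ac_simps)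
    finally have c2: "real (card (B2 \<tau> q)) \<le> real (N choose S) * ((real Vq * real S / real N) ^ k / fact k)" .
    have "(real Vq * real S / real N) ^ k / fact k \<le> (3 * (real Vq * real S / real N) / real k) ^ k"
    proof -
      define y where "y = real Vq * real S / real N"
      have y0: "y \<ge> 0" unfolding y_def by simp
      have "y ^ k / fact k \<le> y ^ k * 3 ^ k / real k ^ k"
        using k_pos y0 fact_lower[of k]
        by (simp add: field_simps) (metis mult_left_mono zero_le_power mult.commute mult.left_commute)
      also have "\<dots> = (3 * y / real k) ^ k" by (simp add: power_mult_distrib power_divide)
      finally show ?thesis unfolding y_def .
    qed
    also have "(3 * (real Vq * real S / real N) / real k) ^ k \<le> (3/4) ^ k"
    proof (rule power_mono)
      have "real Vq * real S / real N \<le> real Vq * (Sr + 1) / real N"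
        using S_lt by (intro divide_right_mono mult_left_mono) auto
      also have "\<dots> = ln 2 * x + real Vq / real N"
        unfolding x_def Sr_def rN using Vr_pos by (simp add: field_simps)
      also have "\<dots> \<le> 3/4 * x + 1"
      proof -
        have "real Vq / real N \<le> 1" using Vq_le[of q] unfolding Vq_def by (simp add: N_def divide_le_eq)
        moreover have "ln 2 * x \<le> 3/4 * x" using ln2 x_ge by (intro mult_right_mono) auto
        ultimately show ?thesis by linarith
      qed
      finally have "3 * (real Vq * real S / real N) \<le> 3/4 * real k" using k_ge x_ge assms(1) by linarith
      then show "3 * (real Vq * real S / real N) / real k \<le> 3/4" using pos_divide_le_eq[OF k_pos] by (metis mult.commute)
      show "0 \<le> 3 * (real Vq * real S / real N) / real k" by simp
    qed
    also have "(3/4::real) ^ k \<le> (3/4) ^ (5 * (n + 1))"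
    proof (rule power_decreasing)
      have "real (5 * (n + 1)) \<le> real k" using k_ge x_ge by simp
      then show "5 * (n + 1) \<le> k" by linarith
    qed auto
    also have "(3/4::real) ^ (5 * (n + 1)) = ((3/4) ^ 5) ^ (n + 1)" by (rule power_mult)
    also have "\<dots> \<le> (1/4) ^ (n + 1)" by (intro power_mono) (simp_all add: power_divide)
    finally have "(real Vq * real S / real N) ^ k / fact k \<le> (1/4) ^ (n + 1)" .
    then have "real (N choose S) * ((real Vq * real S / real N) ^ k / fact k) \<le> real (N choose S) * (1/4) ^ (n + 1)"
      by (intro mult_left_mono) auto
    then show ?thesis using c2 by (simp add: power_divide)
  qed
  define U1 where "U1 = (\<Union>\<tau>\<in>X. B1 \<tau>)"
  define U2 where "U2 = (\<Union>\<tau>\<in>X. \<Union>q\<in>{r..n}. B2 \<tau> q)"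
  have u1: "real (card U1) \<le> real (N choose S) / 2"
  proof -
    have "real (card U1) \<le> real (\<Sum>\<tau>\<in>X. card (B1 \<tau>))"
      unfolding U1_def using card_UN_le[OF fX] of_nat_le_iff by blast
    also have "\<dots> = (\<Sum>\<tau>\<in>X. real (card (B1 \<tau>)))" by simp
    also have "\<dots> \<le> real (card X) * (real (N choose S) / 2 ^ (n + 1))"
      by (rule sum_bounded_above) (use b1 in auto)
    also have "\<dots> = real (N choose S) / 2" using cX rN by simp
    finally show ?thesis .
  qed
  have u2: "real (card U2) < real (N choose S) / 2"
  proof -
    have "real (card U2) \<le> real (\<Sum>\<tau>\<in>X. card (\<Union>q\<in>{r..n}. B2 \<tau> q))"
      unfolding U2_def using card_UN_le[OF fX] of_nat_le_iff by blast
    also have "\<dots> \<le> real (\<Sum>\<tau>\<in>X. \<Sum>q\<in>{r..n}. card (B2 \<tau> q))"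
      by (intro of_nat_mono sum_mono card_UN_le) auto
    also have "\<dots> = (\<Sum>\<tau>\<in>X. \<Sum>q\<in>{r..n}. real (card (B2 \<tau> q)))" by simp
    also have "\<dots> \<le> (\<Sum>\<tau>\<in>X. real (card {r..n}) * (real (N choose S) / 4 ^ (n + 1)))"
      by (intro sum_mono sum_bounded_above) (use b2 in auto)
    also have "\<dots> = real N * real (n + 1 - r) * (real (N choose S) / 4 ^ (n + 1))"
      using cX by simp
    also have "\<dots> \<le> real N * real n * (real (N choose S) / 4 ^ (n + 1))"
      using assms by (intro mult_right_mono mult_left_mono) auto
    also have "\<dots> < real (N choose S) / 2"
    proof -
      have ln: "real n < 2 ^ n" using less_exp[of n] by (metis of_nat_less_iff of_nat_numeral of_nat_power)
      then have a: "real n * 2 ^ n < 2 ^ n * 2 ^ n" by (intro mult_strict_right_mono) auto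
      have p: "(0::real) < 2 ^ n * 2 ^ n" by simp
      have e: "(4::real) ^ (n + 1) = 4 * (2 ^ n * 2 ^ n)"
        by (simp add: power_mult_distrib[symmetric])
      have "2 ^ n * real n < 1 / 2 * (4::real) ^ (n + 1)" unfolding e using a p ln by simp (use ln in linarith)
      then have h: "2 ^ n * real n / 4 ^ (n + 1) < 1 / 2" by (subst pos_divide_less_eq) auto
      have "real N * real n * (real (N choose S) / 4 ^ (n + 1)) = real (N choose S) * (2 ^ n * real n / 4 ^ (n + 1))"
        by (simp add: rN)
      also have "\<dots> < real (N choose S) * (1 / 2)" using h Cs_pos by (intro mult_strict_left_mono) auto
      finally show ?thesis by simp
    qed
    finally show ?thesis .
  qed
  have fCs: "finite Cs" unfolding Cs_def using fX by (simp add: finite_Collect_subsets)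
  have "\<not> Cs \<subseteq> U1 \<union> U2"
  proof
    assume "Cs \<subseteq> U1 \<union> U2"
    have fU: "finite (U1 \<union> U2)" by (rule finite_subset[OF _ fCs]) (auto simp: U1_def U2_def B1_def B2_def)
    have "card Cs \<le> card (U1 \<union> U2)" by (rule card_mono[OF fU]) fact
    also have "\<dots> \<le> card U1 + card U2" by (rule card_Un_le)
    finally have "real (card Cs) \<le> real (card U1) + real (card U2)" by linarith
    then show False using u1 u2 cCs by simp
  qed
  then obtain C where C: "C \<in> Cs" "C \<notin> U1" "C \<notin> U2" by blast
  have CX: "C \<subseteq> cube n" "card C = S" using C(1) by (auto simp: Cs_def X_def)
  show ?thesis
  proof (intro exI conjI allI impI ballI)
    show "covering n r C" unfolding covering_def
    proof (intro conjI ballI)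
      show "C \<subseteq> cube n" by fact
      fix t assume t: "t \<in> cube n"
      then have "C \<notin> B1 t" using C(2) by (auto simp: U1_def X_def)
      then obtain s where s: "s \<in> C" "s \<in> hball n r t" using C(1) by (auto simp: B1_def)
      have "hdist t s = hdist s t" using s CX t by (intro hdist_sym) (auto simp: cube_def)
      then show "\<exists>s\<in>C. hdist t s \<le> r" using s by (auto simp: hball_def intro!: bexI[of _ s])
    qed
    show "int (card C) = \<lceil>ln 2 * real (n + 1) * 2 ^ n / real (V n r)\<rceil>"
    proof -
      have "0 \<le> \<lceil>Sr\<rceil>" using Sr_pos by simp
      then have "int (card C) = \<lceil>Sr\<rceil>" using CX(2) unfolding S_def by simp
      then show ?thesis unfolding Sr_def .
    qed
    fix q \<tau> assume q: "r \<le> q \<and> q \<le> n" and \<tau>: "\<tau> \<in> cube n"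
    then have "C \<notin> B2 \<tau> q" using C(3) by (auto simp: U2_def X_def)
    then have "card (hball n q \<tau> \<inter> C) < kq q" using C(1) by (auto simp: B2_def)
    then show "int (card (hball n q \<tau> \<inter> C)) < \<lceil>5 * real (n + 1) * real (V n q) / real (V n r)\<rceil>"
      unfolding kq_def by (simp add: zless_nat_eq_int_zless)
  qed
qed


end
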